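(* In the setting below, with $Q=L/\mu$, let $\log$ denote the natural logarithm, let $a=\lceil\log(12(K+1)Q)\rceil+2$, let \[ \widetilde{\eta}_a=\frac1a\Big(\frac{1}{12(K+1)Q}\Big)^{\frac{2}{a-2}}, \] and run the PIAG method with step size $\eta=\frac{1}{3L(K+1)}\widetilde{\eta}_a$. Let $c=\max_{0\le j\le aK}F_j$, let $\epsilon>0$ and $M=54e^2$. Then $F(x_k)-F(x^* )\le\epsilon$ for every integer \[ k\ge Ma^2(K+1)^2Q\log(c/\epsilon)+aK . \]
   Context: Let $m,n\ge 1$ be integers and $\|\cdot\|$ the Euclidean norm on $\mathbb{R}^n$. For $i=1,\dots,m$, let $f_i:\mathbb{R}^n\to\mathbb{R}$ be continuously differentiable with $\|\nabla f_i(x)-\nabla f_i(y)\|\le L_i\|x-y\|$ for all $x,y$, where $L_i\ge 0$ (the $f_i$ are not assumed convex). Let $f=\frac1m\sum_{i=1}^m f_i$ and $L=\frac1m\sum_{i=1}^m L_i$. Assume $f$ is $\mu$-strongly convex for some $\mu>0$ (i.e. $x\mapsto f(x)-\frac{\mu}{2}\|x\|^2$ is convex). Let $r:\mathbb{R}^n\to(-\infty,\infty]$ be proper, closed and convex, let $F=f+r$, and let $x^*$ be the unique minimizer of $F$. For $\eta>0$ define $\mathrm{prox}_r^\eta(y)=\arg\min_{x\in\mathbb{R}^n}\{\frac12\|x-y\|^2+\eta r(x)\}$. PIAG method: fix an integer $K\ge 0$, a step size $\eta>0$ and $x_0\in\mathbb{R}^n$; for each $k\ge0$ and each $i$ let $\tau_{i,k}$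 be any (deterministically chosen) integer with $\max(k-K,0)\le\tau_{i,k}\le k$; set $g_k=\frac1m\sum_{i=1}^m\nabla f_i(x_{\tau_{i,k}})$ and $x_{k+1}=\mathrm{prox}_r^\eta(x_k-\eta g_k)$. Define $F_k=F(x_k)-F(x^* )$. *)

theory Defs
  imports "HOL-Analysis.Analysis"
begin

definition proper_fun :: "('a \<Rightarrow> ereal) \<Rightarrow> bool" where
  "proper_fun r \<longleftrightarrow> (\<forall>x. r x \<noteq> -\<infinity>) \<and> (\<exists>x. r x \<noteq> \<infinity>)"

definition closed_fun :: "('a::topological_space \<Rightarrow> ereal) \<Rightarrow> bool" where
  "closed_fun r \<longleftrightarrow> closed {p :: 'a \<times> real. r (fst p) \<le> ereal (snd p)}"

definition convex_fun :: "('a::real_vector \<Rightarrow> ereal) \<Rightarrow> bool" where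
  "convex_fun r \<longleftrightarrow> (\<forall>x y t. 0 \<le> t \<and> t \<le> 1 \<longrightarrow>
      r ((1 - t) *\<^sub>R x + t *\<^sub>R y) \<le> ereal (1 - t) * r x + ereal t * r y)"

text \<open>Proximal operator: the (unique, for proper closed convex r) minimizer.\<close>
definition prox :: "('a::real_normed_vector \<Rightarrow> ereal) \<Rightarrow> real \<Rightarrow> 'a \<Rightarrow> 'a" where
  "prox r \<eta> y = (THE x. \<forall>z. ereal (norm (x - y)^2 / 2) + ereal \<eta> * r x
                              \<le> ereal (norm (z - y)^2 / 2) + ereal \<eta> * r z)"

end

theory Submission
  imports Defs
begin

lemma descent:
  fixes \<phi> :: "'a::real_inner \<Rightarrow> real" and G :: "'a \<Rightarrow> 'a"
  assumes der: "\<And>z. (\<phi> has_derivative (\<lambda>h. G z \<bullet> h)) (at z)"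
    and lipG: "\<And>y z. norm (G y - G z) \<le> L * norm (y - z)"
  shows "\<phi> y \<le> \<phi> x + G x \<bullet> (y - x) + L / 2 * (norm (y - x))\<^sup>2"
proof -
  define h where "h = y - x"
  define \<psi> where "\<psi> s = \<phi> (x + s *\<^sub>R h) - s * (G x \<bullet> h) - L / 2 * s\<^sup>2 * (norm h)\<^sup>2" for s :: real
  have D: "(\<psi> has_real_derivative (G (x + s *\<^sub>R h) \<bullet> h - G x \<bullet> h - L * s * (norm h)\<^sup>2)) (at s)" for s
  proof -
    have 1: "((\<lambda>s. x + s *\<^sub>R h) has_derivative (\<lambda>d. d *\<^sub>R h)) (at s)"
      by (auto intro!: derivative_eq_intros)
    have 2: "((\<lambda>s. \<phi> (x + s *\<^sub>R h)) has_derivative (\<lambda>d. G (x + s *\<^sub>R h) \<bullet> (d *\<^sub>R h))) (at s)"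
      using diff_chain_at[OF 1 der] by (simp add: o_def)
    have 3: "((\<lambda>s. \<phi> (x + s *\<^sub>R h)) has_real_derivative (G (x + s *\<^sub>R h) \<bullet> h)) (at s)"
    proof -
      have "(\<lambda>d. G (x + s *\<^sub>R h) \<bullet> (d *\<^sub>R h)) = (*) (G (x + s *\<^sub>R h) \<bullet> h)"
        by (auto simp: fun_eq_iff)
      then show ?thesis using 2 unfolding has_field_derivative_def by simp
    qed
    have 4: "((\<lambda>s. s * (G x \<bullet> h)) has_real_derivative (G x \<bullet> h)) (at s)"
      by (auto intro!: derivative_eq_intros)
    have 5: "((\<lambda>s. L / 2 * s\<^sup>2 * (norm h)\<^sup>2) has_real_derivative (L * s * (norm h)\<^sup>2)) (at s)"
      by (auto intro!: derivative_eq_intros)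
    show ?thesis unfolding \<psi>_def
      by (intro DERIV_diff 3 4 5)
  qed
  have "\<psi> 1 \<le> \<psi> 0"
  proof (rule DERIV_nonpos_imp_nonincreasing[of 0 1])
    fix s :: real assume s: "0 \<le> s" "s \<le> 1"
    have "G (x + s *\<^sub>R h) \<bullet> h - G x \<bullet> h = (G (x + s *\<^sub>R h) - G x) \<bullet> h"
      by (simp add: inner_diff_left)
    also have "\<dots> \<le> norm (G (x + s *\<^sub>R h) - G x) * norm h"
      by (rule norm_cauchy_schwarz)
    also have "\<dots> \<le> L * norm (s *\<^sub>R h) * norm h"
      using lipG[of "x + s *\<^sub>R h" x] by (simp add: mult_right_mono)
    also have "\<dots> = L * s * (norm h)\<^sup>2" using s by (simp add: power2_eq_square)
    finally show "\<exists>y. DERIV \<psi> s :> y \<and> y \<le> 0" using D by (intro exI[of _ "G (x + s *\<^sub>R h) \<bullet> h - G x \<bullet> h - L * s * (norm h)\<^sup>2"]) auto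
  qed simp
  then show ?thesis unfolding \<psi>_def h_def by simp
qed

lemma strong_grad:
  fixes \<phi> :: "'a::real_inner \<Rightarrow> real" and G :: "'a \<Rightarrow> 'a"
  assumes der: "\<And>z. (\<phi> has_derivative (\<lambda>h. G z \<bullet> h)) (at z)"
    and conv: "convex_on UNIV (\<lambda>z. \<phi> z - \<mu> / 2 * (norm z)\<^sup>2)"
  shows "\<phi> x + G x \<bullet> (z - x) + \<mu> / 2 * (norm (z - x))\<^sup>2 \<le> \<phi> z"
proof -
  define h where "h = z - x"
  define \<psi> where "\<psi> s = \<phi> (x + s *\<^sub>R h) - \<mu> / 2 * ((x + s *\<^sub>R h) \<bullet> (x + s *\<^sub>R h))" for s :: real
  have cvx: "convex_on UNIV \<psi>"
  proof (rule convex_onI)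
    fix t a b :: real assume t: "0 < t" "t < 1"
    have e: "x + ((1 - t) *\<^sub>R a + t *\<^sub>R b) *\<^sub>R h = (1 - t) *\<^sub>R (x + a *\<^sub>R h) + t *\<^sub>R (x + b *\<^sub>R h)"
      by (simp add: algebra_simps)
    show "\<psi> ((1 - t) *\<^sub>R a + t *\<^sub>R b) \<le> (1 - t) * \<psi> a + t * \<psi> b"
      using convex_onD[OF conv, of t "x + a *\<^sub>R h" "x + b *\<^sub>R h"] t
      unfolding \<psi>_def e by (simp add: power2_norm_eq_inner algebra_simps)
  qed simp
  have D: "(\<psi> has_real_derivative (G x \<bullet> h - \<mu> * (x \<bullet> h))) (at 0)"
  proof -
    have 1: "((\<lambda>s. x + s *\<^sub>R h) has_derivative (\<lambda>d. d *\<^sub>R h)) (at 0)"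
      by (auto intro!: derivative_eq_intros)
    have 2: "((\<lambda>s. \<phi> (x + s *\<^sub>R h)) has_derivative (\<lambda>d. G (x + 0 *\<^sub>R h) \<bullet> (d *\<^sub>R h))) (at 0)"
      using diff_chain_at[OF 1 der] by (simp add: o_def)
    have 3: "((\<lambda>s. \<phi> (x + s *\<^sub>R h)) has_real_derivative (G x \<bullet> h)) (at 0)"
    proof -
      have "(\<lambda>d. G (x + 0 *\<^sub>R h) \<bullet> (d *\<^sub>R h)) = (*) (G x \<bullet> h)"
        by (auto simp: fun_eq_iff)
      then show ?thesis using 2 unfolding has_field_derivative_def by simp
    qed
    have 4: "((\<lambda>s. \<mu> / 2 * ((x + s *\<^sub>R h) \<bullet> (x + s *\<^sub>R h))) has_real_derivative (\<mu> * (x \<bullet> h))) (at 0)"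
    proof -
      have "(\<lambda>s. \<mu> / 2 * ((x + s *\<^sub>R h) \<bullet> (x + s *\<^sub>R h))) = (\<lambda>s. \<mu> / 2 * (x \<bullet> x) + \<mu> * (x \<bullet> h) * s + \<mu> / 2 * (h \<bullet> h) * s\<^sup>2)"
        by (auto simp: fun_eq_iff algebra_simps inner_commute power2_eq_square)
      moreover have "((\<lambda>s. \<mu> / 2 * (x \<bullet> x) + \<mu> * (x \<bullet> h) * s + \<mu> / 2 * (h \<bullet> h) * s\<^sup>2) has_real_derivative (\<mu> * (x \<bullet> h))) (at 0)"
        by (auto intro!: derivative_eq_intros)
      ultimately show ?thesis by simp
    qed
    show ?thesis unfolding \<psi>_def by (intro DERIV_diff 3 4)
  qed
  have "\<psi> 1 - \<psi> 0 \<ge> (G x \<bullet> h - \<mu> * (x \<bullet> h)) * (1 - 0)"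
    by (rule convex_on_imp_above_tangent[OF cvx]) (use D in auto)
  then show ?thesis unfolding \<psi>_def h_def
    by (simp add: power2_norm_eq_inner algebra_simps inner_commute)
qed

lemma le_plus_eps:
  fixes A B C :: real
  assumes "C \<ge> 0" "\<And>s. 0 < s \<Longrightarrow> s < 1 \<Longrightarrow> A \<le> B + s * C"
  shows "A \<le> B"
proof (rule ccontr)
  assume "\<not> A \<le> B"
  then have AB: "A - B > 0" by simp
  define s where "s = min (1/2) ((A - B) / (2 * (C + 1)))"
  have s: "0 < s" "s < 1" using AB assms(1) by (auto simp: s_def)
  have "s * C \<le> (A - B) / (2 * (C + 1)) * C"
    using assms(1) by (intro mult_right_mono) (auto simp: s_def)
  also have "\<dots> = (A - B) * (C / (2 * (C + 1)))" by simp
  also have "\<dots> < (A - B) * 1"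
    using AB assms(1) by (intro mult_strict_left_mono) (auto simp: divide_less_eq)
  also have "\<dots> = A - B" by simp
  finally show False using assms(2)[OF s] by simp
qed

lemma convex_fun_real:
  assumes cv: "convex_fun r" and pr: "proper_fun r"
    and w: "r w \<noteq> \<infinity>" and z: "r z \<noteq> \<infinity>" and s: "0 \<le> s" "s \<le> 1"
  shows "r ((1 - s) *\<^sub>R w + s *\<^sub>R z) \<noteq> \<infinity> \<and>
    real_of_ereal (r ((1 - s) *\<^sub>R w + s *\<^sub>R z)) \<le> (1 - s) * real_of_ereal (r w) + s * real_of_ereal (r z)"
proof -
  have fw: "r w = ereal (real_of_ereal (r w))" and fz: "r z = ereal (real_of_ereal (r z))"
    and fq: "r ((1 - s) *\<^sub>R w + s *\<^sub>R z) \<noteq> -\<infinity>"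
    using w z pr unfolding proper_fun_def by (auto simp: ereal_real)
  have "r ((1 - s) *\<^sub>R w + s *\<^sub>R z) \<le> ereal (1 - s) * r w + ereal s * r z"
    using cv s unfolding convex_fun_def by blast
  also have "\<dots> = ereal ((1 - s) * real_of_ereal (r w) + s * real_of_ereal (r z))"
    by (subst fw, subst fz) simp
  finally have le: "r ((1 - s) *\<^sub>R w + s *\<^sub>R z) \<le> ereal ((1 - s) * real_of_ereal (r w) + s * real_of_ereal (r z))" .
  then have "r ((1 - s) *\<^sub>R w + s *\<^sub>R z) \<noteq> \<infinity>" by auto
  with le fq show ?thesis by (cases "r ((1 - s) *\<^sub>R w + s *\<^sub>R z)") auto
qed

lemma arith1:
  fixes N1 e W B M s Z :: real
  assumes "N1 / 2 + e * W \<le> (N1 + 2 * B + M) / 2 + e * ((1 - s) * W + s * Z)"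
  shows "s * (e * W) \<le> B + s * (e * Z) + M / 2"
proof -
  have "e * ((1 - s) * W + s * Z) = e * W - s * (e * W) + s * (e * Z)" by (simp add: algebra_simps)
  moreover have "(N1 + 2 * B + M) / 2 = N1 / 2 + B + M / 2" by simp
  ultimately show ?thesis using assms by linarith
qed

lemma prox_opt_ineq:
  fixes r :: "'a::real_inner \<Rightarrow> ereal" and R :: "'a \<Rightarrow> real"
  assumes cv: "convex_fun r" and pr: "proper_fun r" and eta: "\<eta> > 0"
    and R_def: "\<And>z. R z = real_of_ereal (r z)"
    and wD: "r w \<noteq> \<infinity>"
    and minw: "\<And>z. r z \<noteq> \<infinity> \<Longrightarrow> (norm (w - y))\<^sup>2 / 2 + \<eta> * R w \<le> (norm (z - y))\<^sup>2 / 2 + \<eta> * R z"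
    and zD: "r z \<noteq> \<infinity>"
  shows "\<eta> * R w + (y - w) \<bullet> (z - w) \<le> \<eta> * R z"
proof -
  have key: "\<eta> * R w \<le> (w - y) \<bullet> (z - w) + \<eta> * R z + s * ((norm (z - w))\<^sup>2 / 2)"
    if s: "0 < s" "s < 1" for s
  proof -
    define q where "q = (1 - s) *\<^sub>R w + s *\<^sub>R z"
    from convex_fun_real[OF cv pr wD zD, of s] s
    have qD: "r q \<noteq> \<infinity>" and Rq: "R q \<le> (1 - s) * R w + s * R z"
      by (auto simp: q_def R_def)
    have qy: "q - y = (w - y) + s *\<^sub>R (z - w)" by (simp add: q_def algebra_simps)
    define a where "a = (w - y) \<bullet> (z - w)"
    define N where "N = (norm (z - w))\<^sup>2"
    define N1 where "N1 = (norm (w - y))\<^sup>2"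
    have nq: "(norm (q - y))\<^sup>2 = N1 + 2 * s * a + s\<^sup>2 * N"
      unfolding qy power2_norm_eq_inner a_def N_def N1_def
      by (simp add: inner_add_left inner_add_right algebra_simps power2_eq_square inner_commute)
    have "N1 / 2 + \<eta> * R w \<le> (norm (q - y))\<^sup>2 / 2 + \<eta> * R q"
      unfolding N1_def by (rule minw[OF qD])
    also have "\<dots> \<le> (norm (q - y))\<^sup>2 / 2 + \<eta> * ((1 - s) * R w + s * R z)"
      using Rq eta by simp
    finally have fin: "N1 / 2 + \<eta> * R w \<le> (N1 + 2 * (s * a) + (s\<^sup>2 * N)) / 2 + \<eta> * ((1 - s) * R w + s * R z)"
      unfolding nq by (simp add: mult.assoc)
    have "s * (\<eta> * R w) \<le> s * a + s * (\<eta> * R z) + (s\<^sup>2 * N) / 2"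
      using arith1[OF fin] by simp
    then have "s * (\<eta> * R w) \<le> s * (a + \<eta> * R z + s * (N / 2))"
      by (simp add: algebra_simps power2_eq_square)
    then have "\<eta> * R w \<le> a + \<eta> * R z + s * (N / 2)"
      using s by (simp add: mult_le_cancel_left_pos)
    then show ?thesis by (simp only: a_def N_def)
  qed
  have "\<eta> * R w \<le> (w - y) \<bullet> (z - w) + \<eta> * R z"
    by (rule le_plus_eps[OF _ key]) simp_all
  moreover have "(y - w) \<bullet> (z - w) = - ((w - y) \<bullet> (z - w))"
    by (metis inner_minus_left minus_diff_eq)
  ultimately show ?thesis by linarith
qed

lemma quad_bound:
  fixes d s K :: real
  assumes d: "d > 0" and s: "s \<ge> 0" and h: "d / 2 * s\<^sup>2 \<le> K * s"
  shows "s \<le> max 1 (2 * \<bar>K\<bar> / d)"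
proof (cases "s \<le> 1")
  case False
  then have "d / 2 * s * s \<le> K * s" using h by (simp add: power2_eq_square)
  then have "d / 2 * s \<le> K" using False by (simp add: mult_le_cancel_right)
  then have "s \<le> 2 * K / d" using d by (simp add: field_simps)
  then show ?thesis by (smt (verit) d divide_right_mono)
qed simp

lemma prox_exists:
  fixes r :: "'a::euclidean_space \<Rightarrow> ereal"
  assumes pr: "proper_fun r" and cl: "closed_fun r" and cv: "convex_fun r"
    and eta: "\<eta> > 0" and gam: "0 \<le> \<gamma>" "\<eta> * \<gamma> < 1"
    and lower: "\<And>z. ereal (c0 - p \<bullet> z - \<gamma> / 2 * (norm z)\<^sup>2) \<le> r z"
  shows "r (prox r \<eta> y) \<noteq> \<infinity> \<and> (\<forall>z. r z \<noteq> \<infinity> \<longrightarrow>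
     \<eta> * real_of_ereal (r (prox r \<eta> y)) + (y - prox r \<eta> y) \<bullet> (z - prox r \<eta> y) \<le> \<eta> * real_of_ereal (r z))"
proof -
  define R where "R z = real_of_ereal (r z)" for z
  define \<Phi> where "\<Phi> z = (norm (z - y))\<^sup>2 / 2 + \<eta> * R z" for z
  define D where "D = {z. r z \<noteq> \<infinity>}"
  have rR: "r z = ereal (R z)" if "z \<in> D" for z
    using that pr unfolding D_def R_def proper_fun_def by (auto simp: ereal_real)
  define \<delta> where "\<delta> = 1 - \<eta> * \<gamma>"
  have \<delta>: "\<delta> > 0" using gam by (simp add: \<delta>_def)
  define B where "B = norm (y + \<eta> *\<^sub>R p)"
  define C where "C = (norm y)\<^sup>2 / 2 + \<eta> * c0"
  have lowR: "c0 - p \<bullet> z - \<gamma> / 2 * (norm z)\<^sup>2 \<le> R z" if "z \<in> D" for z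
    using lower[of z] rR[OF that] by simp
  have lowPhi: "\<delta> / 2 * (norm z)\<^sup>2 - B * norm z + C \<le> \<Phi> z" if "z \<in> D" for z
  proof -
    have e1: "(norm (z - y))\<^sup>2 = (norm z)\<^sup>2 - 2 * (z \<bullet> y) + (norm y)\<^sup>2"
      by (simp add: power2_norm_eq_inner inner_diff_left inner_diff_right inner_commute)
    have e2: "z \<bullet> (y + \<eta> *\<^sub>R p) = z \<bullet> y + \<eta> * (p \<bullet> z)"
      by (simp add: inner_add_right inner_commute)
    have cs: "z \<bullet> (y + \<eta> *\<^sub>R p) \<le> norm z * B"
      unfolding B_def by (rule norm_cauchy_schwarz)
    have "\<eta> * (c0 - p \<bullet> z - \<gamma> / 2 * (norm z)\<^sup>2) \<le> \<eta> * R z"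
      using lowR[OF that] eta by simp
    then have "\<eta> * c0 - \<eta> * (p \<bullet> z) - \<eta> * \<gamma> / 2 * (norm z)\<^sup>2 \<le> \<eta> * R z"
      by (simp add: algebra_simps)
    then show ?thesis using cs unfolding \<Phi>_def e1 \<delta>_def C_def e2
      by (simp add: algebra_simps add_divide_distrib diff_divide_distrib)
  qed
  have bddz: "C - B\<^sup>2 / (2 * \<delta>) \<le> \<Phi> z" if "z \<in> D" for z
  proof -
    have "0 \<le> (\<delta> * norm z - B)\<^sup>2 / (2 * \<delta>)" using \<delta> by simp
    also have "(\<delta> * norm z - B)\<^sup>2 / (2 * \<delta>) = \<delta> / 2 * (norm z)\<^sup>2 - B * norm z + B\<^sup>2 / (2 * \<delta>)"
      using \<delta> by (simp add: power2_eq_square field_simps)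
    finally show ?thesis using lowPhi[OF that] by linarith
  qed
  obtain z0 where z0: "z0 \<in> D" using pr unfolding proper_fun_def D_def by auto
  have ne: "\<Phi> ` D \<noteq> {}" using z0 by auto
  have bdd: "bdd_below (\<Phi> ` D)" using bddz by (intro bdd_belowI[of _ "C - B\<^sup>2 / (2 * \<delta>)"]) auto
  define v where "v = Inf (\<Phi> ` D)"
  have vle: "v \<le> \<Phi> z" if "z \<in> D" for z
    unfolding v_def using bdd that by (simp add: cInf_lower)
  have exz: "\<exists>z. z \<in> D \<and> \<Phi> z < v + 1 / (real n + 1)" for n
  proof -
    have "Inf (\<Phi> ` D) < v + 1 / (real n + 1)" unfolding v_def by simp
    then show ?thesis using cInf_less_iff[OF ne bdd] by auto
  qed
  obtain zs where zs0: "\<forall>n. zs n \<in> D \<and> \<Phi> (zs n) < v + 1 / (real n + 1)"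
    using choice[of "\<lambda>n z. z \<in> D \<and> \<Phi> z < v + 1 / (real n + 1)"] exz by blast
  then have zs: "\<And>n. zs n \<in> D" "\<And>n. \<Phi> (zs n) < v + 1 / (real n + 1)" by auto
  define Rb where "Rb = max 1 (2 * \<bar>\<bar>v + 1 - C\<bar> + B\<bar> / \<delta>)"
  have "norm (zs n) \<le> Rb" for n
  proof -
    have "1 / (real n + 1) \<le> 1" by simp
    then have "\<delta> / 2 * (norm (zs n))\<^sup>2 - B * norm (zs n) + C \<le> v + 1"
      using lowPhi[OF zs(1)] zs(2)[of n] by (smt (verit))
    then have h: "\<delta> / 2 * (norm (zs n))\<^sup>2 \<le> (v + 1 - C) + B * norm (zs n)" by simp
    show ?thesis
    proof (cases "norm (zs n) \<le> 1")
      case True then show ?thesis by (simp add: Rb_def)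
    next
      case False
      have "(v + 1 - C) \<le> \<bar>v + 1 - C\<bar> * norm (zs n)"
        using False by (smt (verit) mult_le_cancel_left1)
      then have "\<delta> / 2 * (norm (zs n))\<^sup>2 \<le> (\<bar>v + 1 - C\<bar> + B) * norm (zs n)"
        using h by (simp add: algebra_simps)
      from quad_bound[OF \<delta> _ this] show ?thesis by (simp add: Rb_def)
    qed
  qed
  then have "bounded (range zs)" unfolding bounded_iff by auto
  then obtain l \<sigma> where \<sigma>: "strict_mono \<sigma>" and lim: "(zs \<circ> \<sigma>) \<longlonglongrightarrow> l"
    using bounded_imp_convergent_subsequence by blast
  define t where "t n = (v + 1 / (real (\<sigma> n) + 1) - (norm (zs (\<sigma> n) - y))\<^sup>2 / 2) / \<eta>" for n
  have epi: "(zs (\<sigma> n), t n) \<in> {p. r (fst p) \<le> ereal (snd p)}" for n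
  proof -
    have "\<eta> * R (zs (\<sigma> n)) < v + 1 / (real (\<sigma> n) + 1) - (norm (zs (\<sigma> n) - y))\<^sup>2 / 2"
      using zs(2)[of "\<sigma> n"] unfolding \<Phi>_def by simp
    then have "R (zs (\<sigma> n)) * \<eta> \<le> v + 1 / (real (\<sigma> n) + 1) - (norm (zs (\<sigma> n) - y))\<^sup>2 / 2"
      by (simp add: mult.commute)
    then have "R (zs (\<sigma> n)) \<le> t n" unfolding t_def by (simp only: pos_le_divide_eq[OF eta])
    then show ?thesis using rR[OF zs(1)] by simp
  qed
  have l1: "(\<lambda>n. 1 / (real n + 1)) \<longlonglongrightarrow> (0::real)"
    using LIMSEQ_inverse_real_of_nat by (simp add: inverse_eq_divide add.commute)
  have l2: "(\<lambda>n. 1 / (real (\<sigma> n) + 1)) \<longlonglongrightarrow> (0::real)"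
    using LIMSEQ_subseq_LIMSEQ[OF l1 \<sigma>] by (simp add: o_def)
  have l3: "(\<lambda>n. zs (\<sigma> n)) \<longlonglongrightarrow> l" using lim by (simp add: o_def)
  have l4: "t \<longlonglongrightarrow> (v + 0 - (norm (l - y))\<^sup>2 / 2) / \<eta>"
    unfolding t_def using eta by (intro tendsto_intros l2 l3) auto
  have "(\<lambda>n. (zs (\<sigma> n), t n)) \<longlonglongrightarrow> (l, (v + 0 - (norm (l - y))\<^sup>2 / 2) / \<eta>)"
    by (intro tendsto_Pair l3 l4)
  from closed_sequentially[OF cl[unfolded closed_fun_def] epi this]
  have rl: "r l \<le> ereal ((v - (norm (l - y))\<^sup>2 / 2) / \<eta>)" by simp
  then have lD: "l \<in> D" unfolding D_def by auto
  have "R l \<le> (v - (norm (l - y))\<^sup>2 / 2) / \<eta>" using rl rR[OF lD] by simp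
  then have "\<Phi> l \<le> v" unfolding \<Phi>_def using eta by (simp add: field_simps)
  then have lmin: "\<Phi> l \<le> \<Phi> z" if "z \<in> D" for z using vle[OF that] by linarith
  have opt: "\<eta> * R w + (y - w) \<bullet> (z - w) \<le> \<eta> * R z"
    if "w \<in> D" "\<And>z. z \<in> D \<Longrightarrow> \<Phi> w \<le> \<Phi> z" "z \<in> D" for w z
    by (rule prox_opt_ineq[OF cv pr eta R_def, of w y z]) (use that in \<open>auto simp: D_def \<Phi>_def\<close>)
  define P where "P x = (\<forall>z. ereal (norm (x - y)^2 / 2) + ereal \<eta> * r x
                              \<le> ereal (norm (z - y)^2 / 2) + ereal \<eta> * r z)" for x
  have Pl: "P l"
    unfolding P_def
  proof
    fix z show "ereal (norm (l - y)^2 / 2) + ereal \<eta> * r l \<le> ereal (norm (z - y)^2 / 2) + ereal \<eta> * r z"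
    proof (cases "z \<in> D")
      case True
      then show ?thesis using lmin[OF True] rR[OF True] rR[OF lD] by (simp add: \<Phi>_def)
    next
      case False
      then have "r z = \<infinity>" unfolding D_def by simp
      then show ?thesis using eta by simp
    qed
  qed
  have Pu: "w = l" if "P w" for w
  proof -
    have "ereal (norm (w - y)^2 / 2) + ereal \<eta> * r w \<le> ereal (norm (l - y)^2 / 2) + ereal \<eta> * r l"
      using that unfolding P_def by blast
    then have wD: "w \<in> D" using rR[OF lD] eta unfolding D_def by (cases "r w") auto
    have wmin: "\<Phi> w \<le> \<Phi> z" if "z \<in> D" for z
      using \<open>P w\<close>[unfolded P_def, rule_format, of z] rR[OF that] rR[OF wD] by (simp add: \<Phi>_def)
    have a1: "\<eta> * R w + (y - w) \<bullet> (l - w) \<le> \<eta> * R l" by (rule opt[OF wD wmin lD])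
    have a2: "\<eta> * R l + (y - l) \<bullet> (w - l) \<le> \<eta> * R w" by (rule opt[OF lD lmin wD])
    have "(y - w) \<bullet> (l - w) + (y - l) \<bullet> (w - l) = (l - w) \<bullet> (l - w)"
      by (simp add: inner_diff_left inner_diff_right inner_commute)
    then have "(l - w) \<bullet> (l - w) \<le> 0" using a1 a2 by linarith
    then have "l - w = 0" using inner_gt_zero_iff[of "l - w"] by linarith
    then show ?thesis by simp
  qed
  have "prox r \<eta> y = l"
    unfolding prox_def using Pl Pu unfolding P_def by (intro the_equality) blast+
  then show ?thesis using lD opt[OF lD lmin] unfolding D_def R_def by auto
qed

lemma norm_comb_sq:
  fixes a b :: "'a::real_inner"
  shows "(norm ((1 - s) *\<^sub>R a + s *\<^sub>R b))\<^sup>2 = (1 - s) * (norm a)\<^sup>2 + s * (norm b)\<^sup>2 - s * (1 - s) * (norm (a - b))\<^sup>2"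
  by (simp add: power2_norm_eq_inner inner_add_left inner_add_right inner_diff_left inner_diff_right
      inner_commute algebra_simps)

lemma f_seg:
  fixes f :: "'a::real_inner \<Rightarrow> real"
  assumes conv: "convex_on UNIV (\<lambda>z. f z - \<mu> / 2 * (norm z)\<^sup>2)" and s: "0 \<le> s" "s \<le> 1"
  shows "f ((1 - s) *\<^sub>R a + s *\<^sub>R b) \<le> (1 - s) * f a + s * f b - \<mu> / 2 * (s * (1 - s)) * (norm (a - b))\<^sup>2"
proof -
  have "f ((1 - s) *\<^sub>R a + s *\<^sub>R b) - \<mu> / 2 * (norm ((1 - s) *\<^sub>R a + s *\<^sub>R b))\<^sup>2
        \<le> (1 - s) * (f a - \<mu> / 2 * (norm a)\<^sup>2) + s * (f b - \<mu> / 2 * (norm b)\<^sup>2)"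
    using convex_onD[OF conv, of s a b] s by simp
  then show ?thesis unfolding norm_comb_sq by (simp add: algebra_simps add_divide_distrib diff_divide_distrib)
qed

lemma quad_growth:
  fixes f :: "'a::real_inner \<Rightarrow> real"
  assumes conv: "convex_on UNIV (\<lambda>z. f z - \<mu> / 2 * (norm z)\<^sup>2)"
    and cv: "convex_fun r" and pr: "proper_fun r"
    and R_def: "\<And>z. R z = real_of_ereal (r z)"
    and xsD: "r xs \<noteq> \<infinity>" and xsmin: "\<And>z. r z \<noteq> \<infinity> \<Longrightarrow> f xs + R xs \<le> f z + R z"
    and xD: "r x \<noteq> \<infinity>"
  shows "\<mu> / 2 * (norm (x - xs))\<^sup>2 \<le> f x + R x - (f xs + R xs)"
proof (rule field_le_mult_one_interval)
  fix s :: real assume s: "0 < s" "s < 1"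
  define z where "z = (1 - s) *\<^sub>R x + s *\<^sub>R xs"
  from convex_fun_real[OF cv pr xD xsD, of s] s
  have zD: "r z \<noteq> \<infinity>" and Rz: "R z \<le> (1 - s) * R x + s * R xs"
    by (auto simp: z_def R_def)
  have fz: "f z \<le> (1 - s) * f x + s * f xs - \<mu> / 2 * (s * (1 - s)) * (norm (x - xs))\<^sup>2"
    unfolding z_def by (rule f_seg[OF conv]) (use s in auto)
  have "f xs + R xs \<le> f z + R z" by (rule xsmin[OF zD])
  then have "(1 - s) * (s * (\<mu> / 2 * (norm (x - xs))\<^sup>2)) \<le> (1 - s) * (f x + R x - (f xs + R xs))"
    using fz Rz by (simp add: algebra_simps)
  then show "s * (\<mu> / 2 * (norm (x - xs))\<^sup>2) \<le> f x + R x - (f xs + R xs)"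
    using s by (simp add: mult_le_cancel_left_pos)
qed

lemma step_arith:
  fixes \<eta> \<mu> L fk1 Rk1 fk Rk Fs gD ND Rz A1 Gu A2 A3 fz Nu Ne :: real
  assumes 
   Ha: "\<eta>*fk1 \<le> \<eta>*fk + \<eta>*gD + \<eta>*L/2*ND"
   and Hb: "\<eta>*Rk1 \<le> \<eta>*Rz - (\<eta>*\<mu>)*A1 - ND - \<eta>*(\<eta>*\<mu>)*Gu - \<eta>*(\<eta>*\<mu>)*A2 - \<eta>*gD - \<eta>*A3"
   and Hc: "-(\<eta>*(\<eta>*\<mu>)*Gu) \<le> \<eta>*fz - \<eta>*fk - \<eta>*\<mu>/2*(\<eta>*\<mu>)^2*Nu"
   and Hd: "\<eta>*(fz+Rz) \<le> \<eta>*((1-(\<eta>*\<mu>))*(fk+Rk) + (\<eta>*\<mu>)*Fs - \<mu>/2*(\<eta>*\<mu>)*(1-(\<eta>*\<mu>))*Nu)"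
   and Y1: "-((\<eta>*\<mu>)*A1) \<le> ND/2 + (\<eta>*\<mu>)^2/2*Nu"
   and Y2: "-(\<eta>*(\<eta>*\<mu>)*A2) \<le> \<eta>^2*Ne + (\<eta>*\<mu>)^2/4*Nu"
   and Y3: "-(\<eta>*A3) \<le> \<eta>^2*Ne + ND/4"
   and QG: "\<eta>*(\<eta>*\<mu>)/2*(\<mu>/2*Nu) \<le> \<eta>*(\<eta>*\<mu>)/2*(fk + Rk - Fs)"
 shows "\<eta>*(fk1 + Rk1 - Fs) \<le> \<eta>*((1-(\<eta>*\<mu>)/2)*(fk+Rk-Fs)) + 2*\<eta>^2*Ne - (1/4 - \<eta>*L/2)*ND"
  using assms by (simp add: algebra_simps power2_eq_square add_divide_distrib diff_divide_distrib) 

lemma sq_expand: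
  fixes a b :: "'a::real_inner"
  shows "(norm (c *\<^sub>R a + d *\<^sub>R b))\<^sup>2 = c\<^sup>2 * (norm a)\<^sup>2 + 2 * c * d * (a \<bullet> b) + d\<^sup>2 * (norm b)\<^sup>2"
  unfolding power2_norm_eq_inner
  by (simp add: inner_add_left inner_add_right inner_commute algebra_simps power2_eq_square)

lemma pg_step:
  fixes f :: "'a::real_inner \<Rightarrow> real" and G :: "'a \<Rightarrow> 'a"
  assumes der: "\<And>z. (f has_derivative (\<lambda>h. G z \<bullet> h)) (at z)"
    and lipG: "\<And>y z. norm (G y - G z) \<le> L * norm (y - z)"
    and conv: "convex_on UNIV (\<lambda>z. f z - \<mu> / 2 * (norm z)\<^sup>2)"
    and cv: "convex_fun r" and pr: "proper_fun r"
    and eta: "\<eta> > 0" and mu: "\<mu> > 0" and t1: "\<eta> * \<mu> \<le> 1"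
    and R_def: "\<And>z. R z = real_of_ereal (r z)"
    and xsD: "r xs \<noteq> \<infinity>" and xsmin: "\<And>z. r z \<noteq> \<infinity> \<Longrightarrow> f xs + R xs \<le> f z + R z"
    and xkD: "r xk \<noteq> \<infinity>" and xk1D: "r xk1 \<noteq> \<infinity>"
    and opt: "\<And>z. r z \<noteq> \<infinity> \<Longrightarrow> \<eta> * R xk1 + ((xk - \<eta> *\<^sub>R g) - xk1) \<bullet> (z - xk1) \<le> \<eta> * R z"
  shows "f xk1 + R xk1 - (f xs + R xs) \<le> (1 - \<eta> * \<mu> / 2) * (f xk + R xk - (f xs + R xs))
           + 2 * \<eta> * (norm (g - G xk))\<^sup>2 - (1 / (4 * \<eta>) - L / 2) * (norm (xk1 - xk))\<^sup>2"
proof -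
  define t where "t = \<eta> * \<mu>"
  define \<Delta> where "\<Delta> = xk1 - xk"
  define u where "u = xk - xs"
  define e where "e = g - G xk"
  define z where "z = (1 - t) *\<^sub>R xk + t *\<^sub>R xs"
  have t0: "0 \<le> t" using eta mu by (simp add: t_def)
  have t1': "t \<le> 1" using t1 by (simp add: t_def)
  from convex_fun_real[OF cv pr xkD xsD t0 t1']
  have zD: "r z \<noteq> \<infinity>" and Rz: "R z \<le> (1 - t) * R xk + t * R xs"
    by (auto simp: z_def R_def)
  have fz: "f z \<le> (1 - t) * f xk + t * f xs - \<mu> / 2 * (t * (1 - t)) * (norm (xk - xs))\<^sup>2"
    unfolding z_def by (rule f_seg[OF conv t0 t1'])
  have zxk: "z - xk = - (t *\<^sub>R u)" by (simp add: z_def u_def algebra_simps)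
  have zxk1: "z - xk1 = - (t *\<^sub>R u + \<Delta>)" by (simp add: z_def u_def \<Delta>_def algebra_simps)
  have yxk1: "(xk - \<eta> *\<^sub>R g) - xk1 = - (\<Delta> + \<eta> *\<^sub>R (G xk + e))" by (simp add: \<Delta>_def e_def algebra_simps)
  have Ha0: "f xk1 \<le> f xk + G xk \<bullet> \<Delta> + L / 2 * (norm \<Delta>)\<^sup>2"
    unfolding \<Delta>_def by (rule descent[OF der lipG])
  have Ha: "\<eta>*f xk1 \<le> \<eta>*f xk + \<eta>*(G xk \<bullet> \<Delta>) + \<eta>*L/2*(norm \<Delta>)\<^sup>2"
    using mult_left_mono[OF Ha0, of \<eta>] eta by (simp add: algebra_simps)
  have ip: "((xk - \<eta> *\<^sub>R g) - xk1) \<bullet> (z - xk1) = t * (\<Delta> \<bullet> u) + (norm \<Delta>)\<^sup>2 + \<eta> * t * (G xk \<bullet> u)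
      + \<eta> * t * (e \<bullet> u) + \<eta> * (G xk \<bullet> \<Delta>) + \<eta> * (e \<bullet> \<Delta>)"
    unfolding yxk1 zxk1
    by (simp add: power2_norm_eq_inner inner_add_left inner_add_right inner_commute algebra_simps)
  have Hb: "\<eta>*R xk1 \<le> \<eta>*R z - (\<eta>*\<mu>)*(\<Delta> \<bullet> u) - (norm \<Delta>)\<^sup>2 - \<eta>*(\<eta>*\<mu>)*(G xk \<bullet> u) - \<eta>*(\<eta>*\<mu>)*(e \<bullet> u) - \<eta>*(G xk \<bullet> \<Delta>) - \<eta>*(e \<bullet> \<Delta>)"
    using opt[OF zD] unfolding ip t_def by simp
  have Hc0: "f xk + G xk \<bullet> (z - xk) + \<mu> / 2 * (norm (z - xk))\<^sup>2 \<le> f z"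
    by (rule strong_grad[OF der conv])
  have Hc0': "f xk - t * (G xk \<bullet> u) + \<mu> / 2 * (t\<^sup>2 * (norm u)\<^sup>2) \<le> f z"
    using Hc0 unfolding zxk by (simp add: power_mult_distrib)
  have Hc: "-(\<eta>*(\<eta>*\<mu>)*(G xk \<bullet> u)) \<le> \<eta>*f z - \<eta>*f xk - \<eta>*\<mu>/2*(\<eta>*\<mu>)^2*(norm u)\<^sup>2"
    using mult_left_mono[OF Hc0', of \<eta>] eta unfolding t_def by (simp add: algebra_simps)
  have Hd0: "f z + R z \<le> (1 - t) * (f xk + R xk) + t * (f xs + R xs) - \<mu> / 2 * t * (1 - t) * (norm u)\<^sup>2"
    using fz Rz unfolding u_def by (simp add: algebra_simps)
  have Hd: "\<eta>*(f z+R z) \<le> \<eta>*((1-(\<eta>*\<mu>))*(f xk+R xk) + (\<eta>*\<mu>)*(f xs + R xs) - \<mu>/2*(\<eta>*\<mu>)*(1-(\<eta>*\<mu>))*(norm u)\<^sup>2)"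
    using mult_left_mono[OF Hd0, of \<eta>] eta unfolding t_def by simp
  have Y1: "-((\<eta>*\<mu>)*(\<Delta> \<bullet> u)) \<le> (norm \<Delta>)\<^sup>2/2 + (\<eta>*\<mu>)^2/2*(norm u)\<^sup>2"
    using sq_expand[of 1 \<Delta> t u] zero_le_power2[of "norm (1 *\<^sub>R \<Delta> + t *\<^sub>R u)"] unfolding t_def
    by (simp add: algebra_simps)
  have Y2: "-(\<eta>*(\<eta>*\<mu>)*(e \<bullet> u)) \<le> \<eta>^2*(norm e)\<^sup>2 + (\<eta>*\<mu>)^2/4*(norm u)\<^sup>2"
    using sq_expand[of "2*\<eta>" e t u] zero_le_power2[of "norm ((2*\<eta>) *\<^sub>R e + t *\<^sub>R u)"] unfolding t_def
    by (simp add: algebra_simps power2_eq_square)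
  have Y3: "-(\<eta>*(e \<bullet> \<Delta>)) \<le> \<eta>^2*(norm e)\<^sup>2 + (norm \<Delta>)\<^sup>2/4"
    using sq_expand[of "2*\<eta>" e 1 \<Delta>] zero_le_power2[of "norm ((2*\<eta>) *\<^sub>R e + 1 *\<^sub>R \<Delta>)"]
    by (simp add: algebra_simps power2_eq_square)
  have QG0: "\<mu> / 2 * (norm u)\<^sup>2 \<le> f xk + R xk - (f xs + R xs)"
    unfolding u_def by (rule quad_growth[OF conv cv pr R_def xsD xsmin xkD])
  have QG: "\<eta>*(\<eta>*\<mu>)/2*(\<mu>/2*(norm u)\<^sup>2) \<le> \<eta>*(\<eta>*\<mu>)/2*(f xk + R xk - (f xs + R xs))"
    using mult_left_mono[OF QG0, of "\<eta>*(\<eta>*\<mu>)/2"] eta mu by simp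
  have fin: "\<eta>*(f xk1 + R xk1 - (f xs + R xs)) \<le> \<eta>*((1-(\<eta>*\<mu>)/2)*(f xk + R xk - (f xs + R xs))) + 2*\<eta>^2*(norm e)\<^sup>2 - (1/4 - \<eta>*L/2)*(norm \<Delta>)\<^sup>2"
    by (rule step_arith[OF Ha Hb Hc Hd Y1 Y2 Y3 QG])
  have "(1/4 - \<eta>*L/2)*(norm \<Delta>)\<^sup>2 = \<eta> * ((1 / (4 * \<eta>) - L / 2) * (norm \<Delta>)\<^sup>2)"
    using eta by (simp add: field_simps)
  with fin have "\<eta>*(f xk1 + R xk1 - (f xs + R xs)) \<le> \<eta> * ((1-(\<eta>*\<mu>)/2)*(f xk + R xk - (f xs + R xs)) + 2*\<eta>*(norm e)\<^sup>2 - (1 / (4 * \<eta>) - L / 2) * (norm \<Delta>)\<^sup>2)"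
    by (simp add: algebra_simps power2_eq_square)
  then show ?thesis using eta unfolding e_def \<Delta>_def by (simp add: mult_le_cancel_left_pos)
qed

lemma shift_sum:
  fixes d :: "nat \<Rightarrow> real"
  shows "(\<Sum>j\<in>{Suc k - K..<Suc k}. (real j + real K - real k) * d j)
       = (\<Sum>j\<in>{k - K..<k}. (real j + real K - real k) * d j) + real K * d k"
proof -
  have A: "(\<Sum>j\<in>{k - K..<Suc k}. (real j + real K - real k) * d j)
       = (\<Sum>j\<in>{k - K..<k}. (real j + real K - real k) * d j) + real K * d k"
    by (subst sum.atLeastLessThan_Suc) auto
  have B: "(\<Sum>j\<in>{k - K..<Suc k}. (real j + real K - real k) * d j)
       = (\<Sum>j\<in>{Suc k - K..<Suc k}. (real j + real K - real k) * d j)"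
  proof (cases "K \<le> k")
    case True
    then have "(\<Sum>j\<in>{k - K..<Suc k}. (real j + real K - real k) * d j)
       = (real (k - K) + real K - real k) * d (k - K) + (\<Sum>j\<in>{Suc (k - K)..<Suc k}. (real j + real K - real k) * d j)"
      by (subst sum.atLeast_Suc_lessThan) auto
    moreover have "Suc (k - K) = Suc k - K" using True by simp
    ultimately show ?thesis using True by (simp add: of_nat_diff)
  next
    case False
    then have "k - K = Suc k - K" by simp
    then show ?thesis by simp
  qed
  show ?thesis using A B by simp
qed

lemma lyap:
  fixes F d E :: "nat \<Rightarrow> real"
  assumes rec: "\<And>k. F (Suc k) \<le> (1 - t / 2) * F k + 2 * \<eta> * E k - b * d k"
    and Eb: "\<And>k. E k \<le> L\<^sup>2 * real K * (\<Sum>j\<in>{k - K..<k}. d j)"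
    and dnn: "\<And>j. d j \<ge> 0"
    and eta: "\<eta> > 0" and t0: "t \<ge> 0" and tK: "t * real K \<le> 1" and t2: "t \<le> 2"
    and bb: "4 * \<eta> * L\<^sup>2 * real K * real K \<le> b"
  shows "F k \<le> (1 - t / 2) ^ k * F 0"
proof -
  define C where "C = 4 * \<eta> * L\<^sup>2 * real K"
  have C0: "C \<ge> 0" using eta by (simp add: C_def)
  define V where "V k = F k + C * (\<Sum>j\<in>{k - K..<k}. (real j + real K + 1 - real k) * d j)" for k
  have w1: "real j + real K + 1 - real k \<ge> 1" if "j \<in> {k - K..<k}" for j k
    using that by auto
  have wK: "real j + real K + 1 - real k \<le> real K" if "j \<in> {k - K..<k}" for j k
    using that by auto
  have FV: "F k \<le> V k" for k
  proof -
    have "0 \<le> (\<Sum>j\<in>{k - K..<k}. (real j + real K + 1 - real k) * d j)"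
      using w1 dnn by (intro sum_nonneg) (smt (verit) mult_nonneg_nonneg)
    then show ?thesis unfolding V_def using C0 by simp
  qed
  have step: "V (Suc k) \<le> (1 - t / 2) * V k" for k
  proof -
    let ?W = "{k - K..<k}"
    have S1: "(\<Sum>j\<in>{Suc k - K..<Suc k}. (real j + real K + 1 - real (Suc k)) * d j)
        = (\<Sum>j\<in>?W. (real j + real K + 1 - real k) * d j) - (\<Sum>j\<in>?W. d j) + real K * d k"
    proof -
      have "(\<Sum>j\<in>{Suc k - K..<Suc k}. (real j + real K + 1 - real (Suc k)) * d j)
          = (\<Sum>j\<in>{Suc k - K..<Suc k}. (real j + real K - real k) * d j)"
        by (intro sum.cong) auto
      also have "\<dots> = (\<Sum>j\<in>?W. (real j + real K - real k) * d j) + real K * d k"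
        by (rule shift_sum)
      also have "(\<Sum>j\<in>?W. (real j + real K - real k) * d j) = (\<Sum>j\<in>?W. (real j + real K + 1 - real k) * d j - d j)"
        by (intro sum.cong) (auto simp: algebra_simps)
      also have "\<dots> = (\<Sum>j\<in>?W. (real j + real K + 1 - real k) * d j) - (\<Sum>j\<in>?W. d j)"
        by (rule sum_subtractf)
      finally show ?thesis .
    qed
    have E2: "2 * \<eta> * E k \<le> C / 2 * (\<Sum>j\<in>?W. d j)"
      using mult_left_mono[OF Eb[of k], of "2 * \<eta>"] eta by (simp add: C_def algebra_simps)
    have KC: "C * real K \<le> b" using bb by (simp add: C_def algebra_simps)
    have W: "t / 2 * (\<Sum>j\<in>?W. (real j + real K + 1 - real k) * d j) \<le> 1 / 2 * (\<Sum>j\<in>?W. d j)"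
      unfolding sum_distrib_left
    proof (rule sum_mono)
      fix j assume j: "j \<in> ?W"
      have "t * (real j + real K + 1 - real k) \<le> t * real K"
        using wK[OF j] t0 by (rule mult_left_mono)
      then have "t * (real j + real K + 1 - real k) \<le> 1" using tK by linarith
      then show "t / 2 * ((real j + real K + 1 - real k) * d j) \<le> 1 / 2 * d j"
        using dnn[of j] mult_right_mono[of "t * (real j + real K + 1 - real k)" 1 "d j"]
        by (simp add: algebra_simps)
    qed
    have "V (Suc k) = F (Suc k) + C * ((\<Sum>j\<in>?W. (real j + real K + 1 - real k) * d j) - (\<Sum>j\<in>?W. d j) + real K * d k)"
      unfolding V_def S1 ..
    also have "\<dots> \<le> (1 - t / 2) * F k + C / 2 * (\<Sum>j\<in>?W. d j) - b * d k
       + C * ((\<Sum>j\<in>?W. (real j + real K + 1 - real k) * d j) - (\<Sum>j\<in>?W. d j) + real K * d k)"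
      using rec[of k] E2 by linarith
    also have "\<dots> \<le> (1 - t / 2) * F k - C / 2 * (\<Sum>j\<in>?W. d j) + C * (\<Sum>j\<in>?W. (real j + real K + 1 - real k) * d j)"
      using mult_right_mono[OF KC dnn[of k]] by (simp add: algebra_simps)
    also have "\<dots> \<le> (1 - t / 2) * V k"
      using mult_left_mono[OF W C0] unfolding V_def by (simp add: algebra_simps)
    finally show ?thesis .
  qed
  have "V k \<le> (1 - t / 2) ^ k * V 0"
  proof (induction k)
    case (Suc k)
    have "V (Suc k) \<le> (1 - t / 2) * V k" by (rule step)
    also have "\<dots> \<le> (1 - t / 2) * ((1 - t / 2) ^ k * V 0)"
      using Suc t2 by (intro mult_left_mono) auto
    finally show ?case by simp
  qed simp
  moreover have "V 0 = F 0" by (simp add: V_def)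
  ultimately show ?thesis using FV[of k] by simp
qed

lemma dist_window:
  fixes x :: "nat \<Rightarrow> 'a::real_normed_vector"
  assumes "k - K \<le> \<tau>" "\<tau> \<le> k"
  shows "norm (x \<tau> - x k) \<le> (\<Sum>j\<in>{k - K..<k}. norm (x (Suc j) - x j))"
proof -
  have "x k - x \<tau> = (\<Sum>j\<in>{\<tau>..<k}. x (Suc j) - x j)"
    using sum_Suc_diff'[OF assms(2), of x] by simp
  then have "norm (x \<tau> - x k) = norm (\<Sum>j\<in>{\<tau>..<k}. x (Suc j) - x j)"
    by (metis norm_minus_commute)
  also have "\<dots> \<le> (\<Sum>j\<in>{\<tau>..<k}. norm (x (Suc j) - x j))" by (rule norm_sum)
  also have "\<dots> \<le> (\<Sum>j\<in>{k - K..<k}. norm (x (Suc j) - x j))"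
    using assms by (intro sum_mono2) auto
  finally show ?thesis .
qed

lemma err_bound:
  fixes x :: "nat \<Rightarrow> 'a::real_normed_vector" and gf :: "nat \<Rightarrow> 'a \<Rightarrow> 'a"
  assumes m: "m \<ge> 1"
    and lip: "\<And>i y z. i \<in> {1..m} \<Longrightarrow> norm (gf i y - gf i z) \<le> Li i * norm (y - z)"
    and Li0: "\<And>i. i \<in> {1..m} \<Longrightarrow> Li i \<ge> 0"
    and tb: "\<And>i. i \<in> {1..m} \<Longrightarrow> k - K \<le> tau i k \<and> tau i k \<le> k"
  shows "norm ((1 / real m) *\<^sub>R (\<Sum>i=1..m. gf i (x (tau i k))) - (1 / real m) *\<^sub>R (\<Sum>i=1..m. gf i (x k)))
     \<le> ((1 / real m) * (\<Sum>i=1..m. Li i)) * (\<Sum>j\<in>{k - K..<k}. norm (x (Suc j) - x j))"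
proof -
  define S where "S = (\<Sum>j\<in>{k - K..<k}. norm (x (Suc j) - x j))"
  have "norm ((1 / real m) *\<^sub>R (\<Sum>i=1..m. gf i (x (tau i k))) - (1 / real m) *\<^sub>R (\<Sum>i=1..m. gf i (x k)))
      = (1 / real m) * norm (\<Sum>i=1..m. gf i (x (tau i k)) - gf i (x k))"
    using m by (simp add: scaleR_diff_right[symmetric] sum_subtractf)
  also have "\<dots> \<le> (1 / real m) * (\<Sum>i=1..m. norm (gf i (x (tau i k)) - gf i (x k)))"
    by (intro mult_left_mono norm_sum) auto
  also have "\<dots> \<le> (1 / real m) * (\<Sum>i=1..m. Li i * S)"
  proof (intro mult_left_mono sum_mono)
    fix i assume i: "i \<in> {1..m}"
    have "norm (gf i (x (tau i k)) - gf i (x k)) \<le> Li i * norm (x (tau i k) - x k)" by (rule lip[OF i])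
    also have "\<dots> \<le> Li i * S"
      unfolding S_def using tb[OF i] Li0[OF i] by (intro mult_left_mono dist_window) auto
    finally show "norm (gf i (x (tau i k)) - gf i (x k)) \<le> Li i * S" .
  qed auto
  also have "\<dots> = ((1 / real m) * (\<Sum>i=1..m. Li i)) * S" by (simp add: sum_distrib_right)
  finally show ?thesis unfolding S_def .
qed

lemma err_sq:
  fixes s :: "nat \<Rightarrow> real"
  assumes "e \<le> L * (\<Sum>j\<in>{k - K..<k}. s j)" "0 \<le> e" "L \<ge> 0"
  shows "e\<^sup>2 \<le> L\<^sup>2 * real K * (\<Sum>j\<in>{k - K..<k}. (s j)\<^sup>2)"
proof -
  have "e\<^sup>2 \<le> (L * (\<Sum>j\<in>{k - K..<k}. s j))\<^sup>2"
    using assms by (intro power_mono) auto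
  also have "\<dots> = L\<^sup>2 * (\<Sum>j\<in>{k - K..<k}. s j)\<^sup>2" by (simp add: power_mult_distrib)
  also have "\<dots> \<le> L\<^sup>2 * ((\<Sum>j\<in>{k - K..<k}. (s j)\<^sup>2) * real (card {k - K..<k}))"
    by (intro mult_left_mono sum_squared_le_sum_of_squares) auto
  also have "\<dots> \<le> L\<^sup>2 * ((\<Sum>j\<in>{k - K..<k}. (s j)\<^sup>2) * real K)"
    by (intro mult_left_mono) (auto intro!: sum_nonneg)
  finally show ?thesis by (simp add: algebra_simps)
qed

lemma params:
  fixes K :: nat and L \<mu> :: real
  assumes mu: "\<mu> > 0" and muL: "\<mu> \<le> L"
  defines "Q \<equiv> L / \<mu>"
  defines "a \<equiv> real_of_int (\<lceil>ln (12 * (real K + 1) * Q)\<rceil>) + 2"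
  defines "\<eta>a \<equiv> (1 / a) * (1 / (12 * (real K + 1) * Q)) powr (2 / (a - 2))"
  defines "\<eta> \<equiv> \<eta>a / (3 * L * (real K + 1))"
  shows "a \<ge> 3" "\<eta> > 0" "\<eta> * L \<le> 1 / (3 * a * (real K + 1))"
    "1 \<le> (\<eta> * \<mu> / 2) * (54 * (exp 1)^2 * a^2 * (real K + 1)^2 * Q)"
proof -
  have L: "L > 0" using mu muL by simp
  have Q1: "Q \<ge> 1" using mu muL by (simp add: Q_def)
  define ll where "ll = ln (12 * (real K + 1) * Q)"
  have big: "12 * (real K + 1) * Q > 1"
  proof -
    have "12 * 1 * 1 \<le> 12 * (real K + 1) * Q" using Q1 by (intro mult_mono) auto
    then show ?thesis by simp
  qed
  have l0: "ll > 0" unfolding ll_def using big by simp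
  have cl: "real_of_int \<lceil>ll\<rceil> \<ge> ll" by simp
  have c1: "real_of_int \<lceil>ll\<rceil> \<ge> 1" using l0 cl by (smt (verit) one_le_ceiling of_int_1_le_iff)
  have a_eq: "a = real_of_int \<lceil>ll\<rceil> + 2" unfolding a_def ll_def ..
  show a3: "a \<ge> 3" using c1 a_eq by simp
  define X where "X = 1 / (12 * (real K + 1) * Q)"
  have X0: "X > 0" using big by (simp add: X_def)
  have lnX: "ln X = - ll" unfolding X_def ll_def using big by (simp add: ln_div)
  have p: "2 / (a - 2) = 2 / real_of_int \<lceil>ll\<rceil>" using a_eq by simp
  have Xp: "X powr (2 / (a - 2)) = exp (- (2 * ll / real_of_int \<lceil>ll\<rceil>))"
    unfolding powr_def p using X0 lnX by simp
  have r1: "2 * ll / real_of_int \<lceil>ll\<rceil> \<le> 2" using cl c1 l0 by (simp add: divide_le_eq)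
  have r0: "2 * ll / real_of_int \<lceil>ll\<rceil> \<ge> 0" using c1 l0 by simp
  have Xlo: "X powr (2 / (a - 2)) \<ge> exp (-2)" unfolding Xp using r1 by simp
  have Xhi: "X powr (2 / (a - 2)) \<le> 1" unfolding Xp using r0 by simp
  have etaa: "\<eta>a = X powr (2 / (a - 2)) / a" unfolding \<eta>a_def X_def by simp
  have etaa0: "\<eta>a > 0" unfolding etaa using a3 X0 by simp
  show "\<eta> > 0" unfolding \<eta>_def using etaa0 L by simp
  have etaL: "\<eta> * L = \<eta>a / (3 * (real K + 1))"
  proof -
    have "\<eta> * L = (L * \<eta>a) / (L * (3 * (real K + 1)))" unfolding \<eta>_def by (simp add: algebra_simps)
    also have "\<dots> = \<eta>a / (3 * (real K + 1))" using L by (intro mult_divide_mult_cancel_left) simp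
    finally show ?thesis .
  qed
  have "\<eta>a \<le> 1 / a" unfolding etaa using Xhi a3 by (simp add: divide_right_mono)
  then have "\<eta>a / (3 * (real K + 1)) \<le> (1 / a) / (3 * (real K + 1))"
    by (intro divide_right_mono) auto
  moreover have "(1 / a) / (3 * (real K + 1)) = 1 / (3 * a * (real K + 1))" by simp
  ultimately show "\<eta> * L \<le> 1 / (3 * a * (real K + 1))" unfolding etaL by linarith
  have "(\<eta> * \<mu> / 2) * (54 * (exp 1)^2 * a^2 * (real K + 1)^2 * Q) = 27 * (exp 1)^2 * a^2 * (real K + 1)^2 * (\<eta> * L)"
    unfolding Q_def using mu by (simp add: field_simps)
  also have "\<dots> = 9 * (real K + 1) * a * ((exp 1)^2 * X powr (2 / (a - 2)))"
  proof -
    have ane: "a \<noteq> 0" and kne: "3 * (real K + 1) \<noteq> 0" and kne2: "real K + 1 \<noteq> 0" using a3 by auto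
    define q where "q = (X powr (2 / (a - 2)) / a) / (3 * (real K + 1))"
    have hq: "q * (3 * a * (real K + 1)) = X powr (2 / (a - 2))"
      unfolding q_def using ane kne2 by simp
    have "27 * (exp 1)\<^sup>2 * a\<^sup>2 * (real K + 1)\<^sup>2 * q = 9 * (real K + 1) * a * ((exp 1)\<^sup>2 * (q * (3 * a * (real K + 1))))"
      by (simp add: algebra_simps power2_eq_square)
    then show ?thesis unfolding etaL etaa hq q_def[symmetric] .
  qed
  also have "(exp 1)^2 * X powr (2 / (a - 2)) \<ge> 1"
  proof -
    have "(exp 1)^2 * exp (-2) = (1::real)"
      by (simp add: power2_eq_square exp_add[symmetric] mult.assoc)
    then show ?thesis using Xlo by (smt (verit) exp_gt_zero mult_left_mono zero_le_power2)
  qed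
  then have "9 * (real K + 1) * a * ((exp 1)^2 * X powr (2 / (a - 2))) \<ge> 9 * (real K + 1) * a * 1"
    using a3 by (intro mult_left_mono) auto
  moreover have "9 * (real K + 1) * a * 1 \<ge> 1" using a3 by (smt (verit) mult_le_cancel_left1 of_nat_0_le_iff)
  ultimately show "1 \<le> (\<eta> * \<mu> / 2) * (54 * (exp 1)^2 * a^2 * (real K + 1)^2 * Q)" by linarith
qed

theorem corollary2:
  fixes m K :: nat
    and fi :: "nat \<Rightarrow> 'a::euclidean_space \<Rightarrow> real"
    and gf :: "nat \<Rightarrow> 'a \<Rightarrow> 'a"
    and Li :: "nat \<Rightarrow> real"
    and \<mu> \<epsilon> :: real
    and r :: "'a \<Rightarrow> ereal"
    and xstar x0 :: 'a
    and tau :: "nat \<Rightarrow> nat \<Rightarrow> nat"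
    and x :: "nat \<Rightarrow> 'a"
  defines "f \<equiv> (\<lambda>z. (1 / real m) * (\<Sum>i=1..m. fi i z))"
  defines "L \<equiv> (1 / real m) * (\<Sum>i=1..m. Li i)"
  defines "F \<equiv> (\<lambda>z. ereal (f z) + r z)"
  defines "Q \<equiv> L / \<mu>"
  defines "a \<equiv> real_of_int (\<lceil>ln (12 * (real K + 1) * Q)\<rceil>) + 2"
  defines "\<eta>a \<equiv> (1 / a) * (1 / (12 * (real K + 1) * Q)) powr (2 / (a - 2))"
  defines "\<eta> \<equiv> \<eta>a / (3 * L * (real K + 1))"
  defines "c \<equiv> Max ((\<lambda>j. F (x j) - F xstar) ` {0 .. nat \<lceil>a\<rceil> * K})"
  defines "M \<equiv> 54 * (exp 1)^2"
  assumes m_pos: "m \<ge> 1"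
    and deriv: "\<And>i z. i \<in> {1..m} \<Longrightarrow> (fi i has_derivative (\<lambda>h. gf i z \<bullet> h)) (at z)"
    and cont: "\<And>i. i \<in> {1..m} \<Longrightarrow> continuous_on UNIV (gf i)"
    and lip: "\<And>i y z. i \<in> {1..m} \<Longrightarrow> norm (gf i y - gf i z) \<le> Li i * norm (y - z)"
    and Li_nonneg: "\<And>i. i \<in> {1..m} \<Longrightarrow> Li i \<ge> 0"
    and mu_pos: "\<mu> > 0"
    and strong: "convex_on UNIV (\<lambda>z. f z - \<mu> / 2 * (norm z)^2)"
    and r_proper: "proper_fun r" and r_closed: "closed_fun r" and r_convex: "convex_fun r"
    and xstar_min: "\<And>z. F xstar \<le> F z"
    and tau_bounds: "\<And>i k. i \<in> {1..m} \<Longrightarrow> k - K \<le> tau i k \<and> tau i k \<le> k"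
    and x_0: "x 0 = x0"
    and x_step: "\<And>k. x (Suc k) = prox r \<eta>
                   (x k - \<eta> *\<^sub>R ((1 / real m) *\<^sub>R (\<Sum>i=1..m. gf i (x (tau i k)))))"
    and eps_pos: "\<epsilon> > 0"
  shows "\<forall>k::nat. (c = 0 \<or> (c \<noteq> \<infinity> \<and>
            real k \<ge> M * a^2 * (real K + 1)^2 * Q * ln (real_of_ereal c / \<epsilon>) + a * real K))
          \<longrightarrow> F (x k) - F xstar \<le> ereal \<epsilon>"
proof -
  define G where "G z = (1 / real m) *\<^sub>R (\<Sum>i=1..m. gf i z)" for z
  have m0: "real m > 0" using m_pos by simp
  have derf: "(f has_derivative (\<lambda>h. G z \<bullet> h)) (at z)" for z
  proof -
    have "((\<lambda>z. \<Sum>i=1..m. fi i z) has_derivative (\<lambda>h. \<Sum>i=1..m. gf i z \<bullet> h)) (at z)"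
      by (rule has_derivative_sum) (use deriv in auto)
    then have "((\<lambda>z. (1 / real m) * (\<Sum>i=1..m. fi i z)) has_derivative (\<lambda>h. (1 / real m) * (\<Sum>i=1..m. gf i z \<bullet> h))) (at z)"
      by (rule has_derivative_mult_right)
    moreover have "(\<lambda>h. (1 / real m) * (\<Sum>i=1..m. gf i z \<bullet> h)) = (\<lambda>h. G z \<bullet> h)"
      by (auto simp: fun_eq_iff G_def inner_sum_left)
    ultimately show ?thesis unfolding f_def by simp
  qed
  have L0: "L \<ge> 0"
  proof -
    have "0 \<le> (\<Sum>i=1..m. Li i)" using Li_nonneg by (intro sum_nonneg) auto
    then show ?thesis unfolding L_def by simp
  qed
  have lipG: "norm (G y - G z) \<le> L * norm (y - z)" for y z
  proof -
    have "norm (G y - G z) = (1 / real m) * norm (\<Sum>i=1..m. gf i y - gf i z)"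
      unfolding G_def using m0 by (simp add: scaleR_diff_right[symmetric] sum_subtractf)
    also have "\<dots> \<le> (1 / real m) * (\<Sum>i=1..m. norm (gf i y - gf i z))"
      by (intro mult_left_mono norm_sum) auto
    also have "\<dots> \<le> (1 / real m) * (\<Sum>i=1..m. Li i * norm (y - z))"
      by (intro mult_left_mono sum_mono lip) auto
    also have "\<dots> = L * norm (y - z)" unfolding L_def by (simp add: sum_distrib_right)
    finally show ?thesis .
  qed
  have muL: "\<mu> \<le> L"
  proof -
    obtain bb :: 'a where bb: "bb \<in> Basis" using nonempty_Basis by blast
    have nb: "norm bb = 1" using bb by simp
    have "f 0 + G 0 \<bullet> (bb - 0) + \<mu> / 2 * (norm (bb - 0))\<^sup>2 \<le> f bb"
      by (rule strong_grad[OF derf strong])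
    moreover have "f bb \<le> f 0 + G 0 \<bullet> (bb - 0) + L / 2 * (norm (bb - 0))\<^sup>2"
      by (rule descent[OF derf lipG])
    ultimately show ?thesis using nb by simp
  qed
  have pa: "a \<ge> 3" "\<eta> > 0" "\<eta> * L \<le> 1 / (3 * a * (real K + 1))"
    "1 \<le> (\<eta> * \<mu> / 2) * (54 * (exp 1)^2 * a^2 * (real K + 1)^2 * Q)"
    using params[OF mu_pos muL, of K] unfolding \<eta>_def \<eta>a_def a_def Q_def by auto
  have eta: "\<eta> > 0" by (rule pa(2))
  have etaL9: "\<eta> * L * (real K + 1) \<le> 1 / 9"
  proof -
    have "\<eta> * L * (real K + 1) \<le> 1 / (3 * a * (real K + 1)) * (real K + 1)"
      using pa(3) by (intro mult_right_mono) auto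
    also have "\<dots> = 1 / (3 * a)" by simp
    also have "\<dots> \<le> 1 / 9" using pa(1) by (simp add: divide_simps)
    finally show ?thesis .
  qed
  have etaL0: "\<eta> * L \<ge> 0" using eta L0 by simp
  have etaL1: "\<eta> * L \<le> 1 / 9" using etaL9 etaL0 by (smt (verit) mult_le_cancel_left1 of_nat_0_le_iff)
  have etaLK: "\<eta> * L * real K \<le> 1 / 9" using etaL9 etaL0 by (smt (verit) mult_left_mono of_nat_0_le_iff)
  have t0: "\<eta> * \<mu> \<ge> 0" using eta mu_pos by simp
  have tL: "\<eta> * \<mu> \<le> \<eta> * L" using muL eta by simp
  have tK: "\<eta> * \<mu> * real K \<le> 1"
  proof -
    have "\<eta> * \<mu> * real K \<le> \<eta> * L * real K" using tL by (intro mult_right_mono) auto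
    then show ?thesis using etaLK by linarith
  qed
  have t1: "\<eta> * \<mu> \<le> 1" using tL etaL1 by linarith
  define R where "R z = real_of_ereal (r z)" for z
  have rR: "r z = ereal (R z)" if "r z \<noteq> \<infinity>" for z
    using that r_proper unfolding R_def proper_fun_def by (auto simp: ereal_real)
  have Fz: "F z = ereal (f z + R z)" if "r z \<noteq> \<infinity>" for z
    unfolding F_def using rR[OF that] by simp
  obtain z0 where z0: "r z0 \<noteq> \<infinity>" using r_proper unfolding proper_fun_def by auto
  have xsD: "r xstar \<noteq> \<infinity>"
  proof
    assume "r xstar = \<infinity>"
    then have "F xstar = \<infinity>" unfolding F_def by simp
    with xstar_min[of z0] Fz[OF z0] show False by simp
  qed
  have xsmin: "f xstar + R xstar \<le> f z + R z" if "r z \<noteq> \<infinity>" for z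
    using xstar_min[of z] Fz[OF that] Fz[OF xsD] by simp
  define c0 where "c0 = R xstar + G xstar \<bullet> xstar - L * (norm xstar)\<^sup>2"
  have lower: "ereal (c0 - G xstar \<bullet> z - (2 * L) / 2 * (norm z)\<^sup>2) \<le> r z" for z
  proof (cases "r z = \<infinity>")
    case False
    have d: "f z \<le> f xstar + G xstar \<bullet> (z - xstar) + L / 2 * (norm (z - xstar))\<^sup>2"
      by (rule descent[OF derf lipG])
    have par: "(norm (z - xstar))\<^sup>2 \<le> 2 * (norm z)\<^sup>2 + 2 * (norm xstar)\<^sup>2"
    proof -
      have "(norm (z - xstar))\<^sup>2 + (norm (z + xstar))\<^sup>2 = 2 * (norm z)\<^sup>2 + 2 * (norm xstar)\<^sup>2"
        unfolding power2_norm_eq_inner by (simp add: inner_add_left inner_add_right inner_diff_left inner_diff_right inner_commute)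
      then show ?thesis by (smt (verit) zero_le_power2)
    qed
    have "L / 2 * (norm (z - xstar))\<^sup>2 \<le> L / 2 * (2 * (norm z)\<^sup>2 + 2 * (norm xstar)\<^sup>2)"
      using par L0 by (intro mult_left_mono) auto
    then have "c0 - G xstar \<bullet> z - (2 * L) / 2 * (norm z)\<^sup>2 \<le> R z"
      using xsmin[OF False] d unfolding c0_def by (simp add: inner_diff_right algebra_simps)
    then show ?thesis using rR[OF False] by simp
  qed simp
  have etaL2: "\<eta> * (2 * L) < 1" using etaL1 by linarith
  have proxp: "r (x (Suc j)) \<noteq> \<infinity> \<and> (\<forall>z. r z \<noteq> \<infinity> \<longrightarrow>
     \<eta> * R (x (Suc j)) + ((x j - \<eta> *\<^sub>R ((1 / real m) *\<^sub>R (\<Sum>i=1..m. gf i (x (tau i j))))) - x (Suc j)) \<bullet> (z - x (Suc j)) \<le> \<eta> * R z)" for j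
    unfolding x_step[of j] R_def
    by (rule prox_exists[OF r_proper r_closed r_convex eta _ etaL2 lower]) (use L0 in simp)
  show ?thesis
  proof (intro allI impI)
    fix k :: nat
    assume prem: "c = 0 \<or> (c \<noteq> \<infinity> \<and> real k \<ge> M * a^2 * (real K + 1)^2 * Q * ln (real_of_ereal c / \<epsilon>) + a * real K)"
    have cfin: "c \<noteq> \<infinity>" using prem by auto
    have c_ge: "F (x 0) - F xstar \<le> c"
      unfolding c_def by (rule Max_ge) auto
    have x0D: "r (x 0) \<noteq> \<infinity>"
    proof
      assume "r (x 0) = \<infinity>"
      then have "F (x 0) = \<infinity>" unfolding F_def by simp
      then have "c = \<infinity>" using c_ge Fz[OF xsD] by simp
      with cfin show False by simp
    qed
    have xD: "r (x j) \<noteq> \<infinity>" for j using x0D proxp by (cases j) auto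
    define Fk where "Fk j = f (x j) + R (x j) - (f xstar + R xstar)" for j
    define gk where "gk j = (1 / real m) *\<^sub>R (\<Sum>i=1..m. gf i (x (tau i j)))" for j
    define d where "d j = (norm (x (Suc j) - x j))\<^sup>2" for j
    define E where "E j = (norm (gk j - G (x j)))\<^sup>2" for j
    have rec: "Fk (Suc j) \<le> (1 - \<eta> * \<mu> / 2) * Fk j + 2 * \<eta> * E j - (1 / (4 * \<eta>) - L / 2) * d j" for j
      unfolding Fk_def E_def d_def
      by (rule pg_step[OF derf lipG strong r_convex r_proper eta mu_pos t1 R_def xsD xsmin xD xD])
        (use proxp[of j] in \<open>auto simp: gk_def\<close>)
    have Eb: "E j \<le> L\<^sup>2 * real K * (\<Sum>i\<in>{j - K..<j}. d i)" for j
    proof -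
      have "norm (gk j - G (x j)) \<le> L * (\<Sum>i\<in>{j - K..<j}. norm (x (Suc i) - x i))"
        unfolding gk_def G_def L_def by (rule err_bound[OF m_pos lip Li_nonneg tau_bounds]) auto
      from err_sq[OF this _ L0] show ?thesis unfolding E_def d_def by simp
    qed
    have bb: "4 * \<eta> * L\<^sup>2 * real K * real K \<le> 1 / (4 * \<eta>) - L / 2"
    proof -
      have "16 * (\<eta> * L * real K)\<^sup>2 \<le> 16 * (1/9)^2"
        using etaLK etaL0 by (intro mult_left_mono power_mono) auto
      then have "\<eta> * (4 * \<eta> * L\<^sup>2 * real K * real K) \<le> \<eta> * (1 / (4 * \<eta>) - L / 2)"
        using etaL1 eta by (simp add: algebra_simps power2_eq_square)
      then show ?thesis using eta by (simp add: mult_le_cancel_left_pos)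
    qed
    have dnn: "d j \<ge> 0" for j by (simp add: d_def)
    have decay: "Fk k \<le> (1 - \<eta> * \<mu> / 2) ^ k * Fk 0"
      by (rule lyap[OF rec Eb dnn eta t0 tK _ bb]) (use t1 in simp)
    have Fk_nn: "Fk j \<ge> 0" for j unfolding Fk_def using xsmin[OF xD] by simp
    have eqk: "F (x k) - F xstar = ereal (Fk k)" unfolding Fk_def using Fz[OF xD] Fz[OF xsD] by simp
    have eq0: "F (x 0) - F xstar = ereal (Fk 0)" unfolding Fk_def using Fz[OF xD] Fz[OF xsD] by simp
    define cr where "cr = real_of_ereal c"
    have c_eq: "c = ereal cr" and cr0: "Fk 0 \<le> cr"
      using c_ge cfin Fk_nn[of 0] unfolding eq0 cr_def by (cases c; auto)+
    have q0: "0 \<le> 1 - \<eta> * \<mu> / 2" "1 - \<eta> * \<mu> / 2 \<le> 1" using t1 t0 by auto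
    have pk: "(1 - \<eta> * \<mu> / 2) ^ k \<le> 1" "0 \<le> (1 - \<eta> * \<mu> / 2) ^ k"
      using q0 by (auto intro: power_le_one)
    have "Fk k \<le> \<epsilon>"
    proof (cases "cr \<le> \<epsilon>")
      case True
      have "Fk k \<le> 1 * Fk 0" using decay mult_right_mono[OF pk(1) Fk_nn[of 0]] by linarith
      then show ?thesis using cr0 True by simp
    next
      case False
      then have crp: "cr > \<epsilon>" by simp
      then have c0ne: "c \<noteq> 0" using eps_pos c_eq by auto
      with prem have kb: "real k \<ge> M * a^2 * (real K + 1)^2 * Q * ln (cr / \<epsilon>) + a * real K"
        unfolding cr_def by auto
      have lnp: "ln (cr / \<epsilon>) > 0" using crp eps_pos by simp
      have aK: "a * real K \<ge> 0" using pa(1) by simp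
      define s where "s = \<eta> * \<mu> / 2"
      have "s * real k \<ge> s * (M * a^2 * (real K + 1)^2 * Q * ln (cr / \<epsilon>))"
        using kb aK t0 unfolding s_def by (intro mult_left_mono) auto
      moreover have "s * (M * a^2 * (real K + 1)^2 * Q * ln (cr / \<epsilon>)) \<ge> 1 * ln (cr / \<epsilon>)"
        using mult_right_mono[OF pa(4) less_imp_le[OF lnp]] unfolding s_def M_def by (simp add: mult_ac)
      ultimately have sk: "s * real k \<ge> ln (cr / \<epsilon>)" by simp
      have "(1 - s) ^ k \<le> exp (- s) ^ k"
        using q0 exp_ge_add_one_self[of "- s"] unfolding s_def by (intro power_mono) auto
      also have "\<dots> = exp (- (s * real k))" by (simp add: exp_of_nat_mult[symmetric] mult.commute)
      also have "\<dots> \<le> exp (- ln (cr / \<epsilon>))" using sk by simp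
      also have "\<dots> = \<epsilon> / cr" using crp eps_pos by (simp add: exp_minus)
      finally have pe: "(1 - \<eta> * \<mu> / 2) ^ k \<le> \<epsilon> / cr" unfolding s_def .
      have "Fk k \<le> \<epsilon> / cr * Fk 0" using decay mult_right_mono[OF pe Fk_nn[of 0]] by linarith
      also have "\<dots> \<le> \<epsilon> / cr * cr" using cr0 crp eps_pos by (intro mult_left_mono) auto
      also have "\<dots> = \<epsilon>" using crp eps_pos by simp
      finally show ?thesis .
    qed
    then show "F (x k) - F xstar \<le> ereal \<epsilon>" unfolding eqk by simp
  qed
qed

end
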